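(* For $k=2$ the following equivalences hold in $\{m_1,m_2,m_3\}^*$: $m_1m_3\sim m_3m_1$, $m_1m_2m_2m_3\sim m_2m_3m_1m_2$, $m_1m_2m_3m_2\sim m_2m_1m_2m_3$, $m_1m_1m_2m_2m_2m_3\sim m_2m_3m_1m_1m_2m_2$, and $m_1m_2m_2m_2m_3m_3\sim m_2m_2m_3m_3m_1m_2$. Moreover, $m_1m_2m_2m_2m_3m_3\sim m_2m_2m_3m_3m_1m_2$ cannot be derived from the first three equivalences, i.e. these two words are not related by the smallest congruence containing the first three pairs.
   Context: A system of $2$ stacks in series consists of an input queue, stack 1, stack 2, and an output queue. A state records the contents of each stack and each queue (finitely many distinct labelled elements); there is one additional "illegal" state $\varnothing$. Moves: $m_1$ moves the front of the input queue onto stack 1; $m_2$ pops stack 1 and pushes onto stack 2; $m_3$ pops stack 2 and enqueues at the back of the output queue. For a word $w$ and state $s$, $w\ast s$ is obtained by applying the moves left to right, with $w\ast s=\varnothing$ if some move is illegal and $w\ast\varnothing=\varnothing$. For words $x,y$, $x\sim y$ iff $x\ast s=y\ast s$ for every state $s$ (including $\varnothing$). *)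

theory Defs
  imports Main
begin

datatype move = M1 | M2 | M3

text \<open>A legal state: (input queue, stack 1, stack 2, output queue), all lists of
labelled elements. Input queue: front = head. Stacks: top = head. The illegal state is None.\<close>
type_synonym 'a state = "('a list \<times> 'a list \<times> 'a list \<times> 'a list) option"

fun step :: "move \<Rightarrow> 'a state \<Rightarrow> 'a state" where
  "step M1 (Some (x # inp, s1, s2, out)) = Some (inp, x # s1, s2, out)"
| "step M2 (Some (inp, x # s1, s2, out)) = Some (inp, s1, x # s2, out)"
| "step M3 (Some (inp, s1, x # s2, out)) = Some (inp, s1, s2, out @ [x])"
| "step _ _ = None"

definition act :: "move list \<Rightarrow> 'a state \<Rightarrow> 'a state" where
  "act w s = fold step w s"

definition valid_state :: "nat state \<Rightarrow> bool" where
  "valid_state s = (case s of None \<Rightarrow> True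
     | Some (inp, s1, s2, out) \<Rightarrow> distinct (inp @ s1 @ s2 @ out))"

definition move_equiv :: "move list \<Rightarrow> move list \<Rightarrow> bool" (infix "\<approx>" 50) where
  "x \<approx> y \<longleftrightarrow> (\<forall>s. valid_state s \<longrightarrow> act x s = act y s)"

inductive cong_closure :: "(move list \<times> move list) set \<Rightarrow> move list \<Rightarrow> move list \<Rightarrow> bool"
  for R where
  base: "(x, y) \<in> R \<Longrightarrow> cong_closure R x y"
| refl: "cong_closure R x x"
| sym: "cong_closure R x y \<Longrightarrow> cong_closure R y x"
| trans: "cong_closure R x y \<Longrightarrow> cong_closure R y z \<Longrightarrow> cong_closure R x z"
| ctxt: "cong_closure R x y \<Longrightarrow> cong_closure R (u @ x @ v) (u @ y @ v)"

end

theory Submission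
  imports Defs
begin

lemma step_M1: "step M1 s = (case s of Some (x # inp, s1, s2, out) \<Rightarrow> Some (inp, x # s1, s2, out) | _ \<Rightarrow> None)"
  by (cases s) (auto split: list.splits)
lemma step_M2: "step M2 s = (case s of Some (inp, x # s1, s2, out) \<Rightarrow> Some (inp, s1, x # s2, out) | _ \<Rightarrow> None)"
  by (cases s) (auto split: list.splits)
lemma step_M3: "step M3 s = (case s of Some (inp, s1, x # s2, out) \<Rightarrow> Some (inp, s1, s2, out @ [x]) | _ \<Rightarrow> None)"
  by (cases s) (auto split: list.splits)

lemmas stp = step_M1 step_M2 step_M3

lemma eqI: "(\<And>s::nat state. act x s = act y s) \<Longrightarrow> x \<approx> y"
  by (simp add: move_equiv_def)

lemma e1: "[M1, M3] \<approx> [M3, M1]"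
  by (rule eqI) (auto simp: act_def stp split: option.splits list.splits)
lemma e2: "[M1, M2, M2, M3] \<approx> [M2, M3, M1, M2]"
  by (rule eqI) (auto simp: act_def stp split: option.splits list.splits)
lemma e3: "[M1, M2, M3, M2] \<approx> [M2, M1, M2, M3]"
  by (rule eqI) (auto simp: act_def stp split: option.splits list.splits)
lemma e4: "[M1, M1, M2, M2, M2, M3] \<approx> [M2, M3, M1, M1, M2, M2]"
  by (rule eqI) (auto simp: act_def stp split: option.splits list.splits)
lemma e5: "[M1, M2, M2, M2, M3, M3] \<approx> [M2, M2, M3, M3, M1, M2]"
  by (rule eqI) (auto simp: act_def stp split: option.splits list.splits)

lemma nf: "cong_closure {([M1, M3], [M3, M1]),
                        ([M1, M2, M2, M3], [M2, M3, M1, M2]),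
                        ([M1, M2, M3, M2], [M2, M1, M2, M3])} x y \<Longrightarrow>
   (\<forall>p t q. p @ t @ q = [M1, M2, M2, M2, M3, M3] \<longrightarrow> (x = t \<longleftrightarrow> y = t))"
proof (induction rule: cong_closure.induct)
  case (base x y)
  then show ?case
    by (auto simp: append_eq_Cons_conv Cons_eq_append_conv)
next
  case (ctxt x y u v)
  show ?case
  proof (intro allI impI)
    fix p t q assume h: "p @ t @ q = [M1, M2, M2, M2, M3, M3]"
    show "(u @ x @ v = t) = (u @ y @ v = t)"
    proof
      assume "u @ x @ v = t"
      then have "(p@u) @ x @ (v@q) = [M1, M2, M2, M2, M3, M3]" using h by (metis append.assoc)
      then have "y = x" using ctxt.IH by blast
      then show "u @ y @ v = t" using \<open>u @ x @ v = t\<close> by simp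
    next
      assume "u @ y @ v = t"
      then have "(p@u) @ y @ (v@q) = [M1, M2, M2, M2, M3, M3]" using h by (metis append.assoc)
      then have "y = x" using ctxt.IH by blast
      then show "u @ x @ v = t" using \<open>u @ y @ v = t\<close> by simp
    qed
  qed
qed auto

theorem mainTheorem9:
  shows "[M1, M3] \<approx> [M3, M1]
    \<and> [M1, M2, M2, M3] \<approx> [M2, M3, M1, M2]
    \<and> [M1, M2, M3, M2] \<approx> [M2, M1, M2, M3]
    \<and> [M1, M1, M2, M2, M2, M3] \<approx> [M2, M3, M1, M1, M2, M2]
    \<and> [M1, M2, M2, M2, M3, M3] \<approx> [M2, M2, M3, M3, M1, M2]
    \<and> \<not> cong_closure {([M1, M3], [M3, M1]),
                        ([M1, M2, M2, M3], [M2, M3, M1, M2]),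
                        ([M1, M2, M3, M2], [M2, M1, M2, M3])}
          [M1, M2, M2, M2, M3, M3] [M2, M2, M3, M3, M1, M2]"
  using e1 e2 e3 e4 e5 nf[of "[M1, M2, M2, M2, M3, M3]" "[M2, M2, M3, M3, M1, M2]"]
  by (metis append.left_neutral append_Nil2 list.inject move.distinct(1))

end
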